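(* Let $\Phi$ be a discrete-time LIF-SNN with direct encoding, latency $T\in\mathbb{N}$ and input dimension $n_{\mathrm{in}}$, and let $k$ be an arbitrary neuron of the first hidden layer, with weight row $w_k\in\mathbb{R}^{n_{\mathrm{in}}}$, bias $b_k$, initial potential $u_k(0)$, and with first-layer leak $\beta\in[0,1]$ and threshold $\vartheta>0$. For $x\in\mathbb{R}^{n_{\mathrm{in}}}$ let $(s^1_k(t;x))_{t\in[T]}\in\{0,1\}^T$ be its spike sequence. Then the neuron $k$ partitions $\mathbb{R}^{n_{\mathrm{in}}}$ via parallel hyperplanes (of the form $\{x:\langle w_k,x\rangle+b_k=c\}$, $c\in\mathbb{R}$) into at most $\frac{T^2+T+2}{2}$ regions, on each of which the time series $(s^1_k(t;x))_{t\in[T]}$ is constant and takes a value in $\{0,1\}^T$ different from its values on the other regions. This upper bound is tight: there exist values of $u_k(0)\in\mathbb{R}$, $\beta\in[0,1]$, $\vartheta>0$ such that the number of regions equals $\frac{T^2+T+2}{2}$.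
   Context: In a discrete-time LIF-SNN with direct encoding, the first hidden layer receives the input $x\in\mathbb{R}^{n_{\mathrm{in}}}$ at every time step, and its spikes $s^1(t)\in\{0,1\}^{n_1}$ and membrane potentials $u^1(t)\in\mathbb{R}^{n_1}$ evolve for $t\in[T]$ as $s^1(t)=H(\beta u^1(t-1)+Wx+b-\vartheta\mathbf{1})$, $u^1(t)=\beta u^1(t-1)+Wx+b-\vartheta s^1(t)$, where $W\in\mathbb{R}^{n_1\times n_{\mathrm{in}}}$ (with $k$-th row $w_k$), $b\in\mathbb{R}^{n_1}$, $u^1(0)\in\mathbb{R}^{n_1}$ (with $k$-th entry $u_k(0)$), $\beta\in[0,1]$, $\vartheta>0$, and $H$ is the entrywise Heaviside function ($H(z)=1$ iff $z\ge 0$). *)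

theory Defs
  imports "HOL-Analysis.Analysis"
begin

definition heav :: "real \<Rightarrow> real" where
  "heav z = (if z \<ge> 0 then 1 else 0)"

text \<open>Membrane potentials u^1(t) of the first hidden layer (direct encoding:
  the input x is presented at every time step).\<close>
fun lif_u1 :: "real \<Rightarrow> real \<Rightarrow> real^'n^'m \<Rightarrow> real^'m \<Rightarrow> real^'m \<Rightarrow> real^'n \<Rightarrow> nat \<Rightarrow> real^'m" where
  "lif_u1 \<beta> \<theta> W b u0 x 0 = u0"
| "lif_u1 \<beta> \<theta> W b u0 x (Suc t) =
     (\<chi> k. \<beta> * (lif_u1 \<beta> \<theta> W b u0 x t $ k) + (W *v x) $ k + b $ k - \<theta>
            * heav (\<beta> * (lif_u1 \<beta> \<theta> W b u0 x t $ k) + (W *v x) $ k + b $ k - \<theta>))"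

text \<open>Spikes s^1(t) for t \<ge> 1.\<close>
definition lif_s1 :: "real \<Rightarrow> real \<Rightarrow> real^'n^'m \<Rightarrow> real^'m \<Rightarrow> real^'m \<Rightarrow> real^'n \<Rightarrow> nat \<Rightarrow> real^'m" where
  "lif_s1 \<beta> \<theta> W b u0 x t =
     (\<chi> k. heav (\<beta> * (lif_u1 \<beta> \<theta> W b u0 x (t - 1) $ k) + (W *v x) $ k + b $ k - \<theta>))"

definition spike_train :: "real \<Rightarrow> real \<Rightarrow> real^'n^'m \<Rightarrow> real^'m \<Rightarrow> real^'m \<Rightarrow> nat \<Rightarrow> 'm \<Rightarrow> real^'n \<Rightarrow> real list" where
  "spike_train \<beta> \<theta> W b u0 T k x = map (\<lambda>t. lif_s1 \<beta> \<theta> W b u0 x t $ k) [1..<Suc T]"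

end

theory Submission
  imports Defs
begin

fun us :: "real \<Rightarrow> real \<Rightarrow> real \<Rightarrow> real \<Rightarrow> nat \<Rightarrow> real" where
  "us \<beta> \<theta> c a 0 = c"
| "us \<beta> \<theta> c a (Suc t) = \<beta> * us \<beta> \<theta> c a t + a - \<theta> * heav (\<beta> * us \<beta> \<theta> c a t + a - \<theta>)"

definition sn :: "real \<Rightarrow> real \<Rightarrow> real \<Rightarrow> real \<Rightarrow> nat \<Rightarrow> nat" where
  "sn \<beta> \<theta> c a j = (if \<beta> * us \<beta> \<theta> c a j + a - \<theta> \<ge> 0 then 1 else 0)"

definition cnt :: "real \<Rightarrow> real \<Rightarrow> real \<Rightarrow> real \<Rightarrow> nat \<Rightarrow> nat" where
  "cnt \<beta> \<theta> c a n = (\<Sum>j<n. sn \<beta> \<theta> c a j)"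

definition strain :: "real \<Rightarrow> real \<Rightarrow> real \<Rightarrow> nat \<Rightarrow> real \<Rightarrow> real list" where
  "strain \<beta> \<theta> c T a = map (\<lambda>j. heav (\<beta> * us \<beta> \<theta> c a j + a - \<theta>)) [0..<T]"

lemma heav_sn: "heav (\<beta> * us \<beta> \<theta> c a j + a - \<theta>) = real (sn \<beta> \<theta> c a j)"
  by (simp add: heav_def sn_def)

lemma us_Suc: "us \<beta> \<theta> c a (Suc t) = \<beta> * us \<beta> \<theta> c a t + a - \<theta> * real (sn \<beta> \<theta> c a t)"
  using heav_sn by simp

declare us.simps(2)[simp del]

lemma sn_le1: "sn \<beta> \<theta> c a j \<le> 1" by (simp add: sn_def)

lemma cnt_Suc: "cnt \<beta> \<theta> c a (Suc n) = cnt \<beta> \<theta> c a n + sn \<beta> \<theta> c a n"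
  by (simp add: cnt_def)

lemma cnt_le: "cnt \<beta> \<theta> c a n \<le> n"
  by (induction n) (auto simp: cnt_Suc cnt_def[of _ _ _ _ 0] intro: add_mono[OF _ sn_le1, simplified])

lemma bridge_u:
  "lif_u1 \<beta> \<theta> W b u0 x t $ k = us \<beta> \<theta> (u0$k) (W$k \<bullet> x + b$k) t"
  by (induction t) (simp_all add: matrix_vector_mul_component us.simps add.assoc)

lemma bridge:
  "spike_train \<beta> \<theta> W b u0 T k x = strain \<beta> \<theta> (u0$k) T (W$k \<bullet> x + b$k)"
proof -
  have "[1..<Suc T] = map Suc [0..<T]" by (simp add: map_Suc_upt)
  then show ?thesis
    by (simp add: spike_train_def strain_def lif_s1_def bridge_u matrix_vector_mul_component add.assoc)
qed

lemma mono_inv: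
  assumes "0 \<le> \<beta>" "\<beta> \<le> 1" "\<theta> > 0" "a \<le> a'"
  shows "cnt \<beta> \<theta> c a n \<le> cnt \<beta> \<theta> c a' n \<and>
    us \<beta> \<theta> c a n + \<theta> * cnt \<beta> \<theta> c a n \<le> us \<beta> \<theta> c a' n + \<theta> * cnt \<beta> \<theta> c a' n"
proof (induction n)
  case 0
  then show ?case by (simp add: cnt_def)
next
  case (Suc n)
  define N where "N = cnt \<beta> \<theta> c a n"
  define N' where "N' = cnt \<beta> \<theta> c a' n"
  define u where "u = us \<beta> \<theta> c a n"
  define u' where "u' = us \<beta> \<theta> c a' n"
  have IH: "N \<le> N'" "u + \<theta> * N \<le> u' + \<theta> * N'" using Suc by (auto simp: N_def N'_def u_def u'_def)
  have w: "us \<beta> \<theta> c a (Suc n) + \<theta> * cnt \<beta> \<theta> c a (Suc n) = \<beta> * u + a + \<theta> * N"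
    by (simp add: us_Suc cnt_Suc u_def N_def algebra_simps)
  have w': "us \<beta> \<theta> c a' (Suc n) + \<theta> * cnt \<beta> \<theta> c a' (Suc n) = \<beta> * u' + a' + \<theta> * N'"
    by (simp add: us_Suc cnt_Suc u'_def N'_def algebra_simps)
  have "\<beta> * (u + \<theta> * N) \<le> \<beta> * (u' + \<theta> * N')" using IH assms by (simp add: mult_left_mono)
  moreover have "(1 - \<beta>) * (\<theta> * N) \<le> (1 - \<beta>) * (\<theta> * N')" using IH assms by (simp add: mult_left_mono)
  ultimately have part2: "\<beta> * u + a + \<theta> * N \<le> \<beta> * u' + a' + \<theta> * N'" using assms(4)
    by (simp add: algebra_simps)
  have part1: "cnt \<beta> \<theta> c a (Suc n) \<le> cnt \<beta> \<theta> c a' (Suc n)"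
  proof (cases "N < N'")
    case True
    then show ?thesis using sn_le1[of \<beta> \<theta> c a n] by (simp add: cnt_Suc N_def N'_def)
  next
    case False
    then have "N = N'" using IH by simp
    then have "u \<le> u'" using IH assms by simp
    then have "\<beta> * u \<le> \<beta> * u'" using assms by (simp add: mult_left_mono)
    then have "sn \<beta> \<theta> c a n \<le> sn \<beta> \<theta> c a' n" using assms(4)
      by (simp add: sn_def u_def u'_def)
    then show ?thesis using \<open>N = N'\<close> by (simp add: cnt_Suc N_def N'_def)
  qed
  show ?case using part1 part2 w w' by simp
qed


definition G :: "real \<Rightarrow> real \<Rightarrow> real \<Rightarrow> nat \<Rightarrow> real \<Rightarrow> nat" where
  "G \<beta> \<theta> c T a = (\<Sum>n\<in>{1..T}. cnt \<beta> \<theta> c a n)"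

definition phi :: "nat \<Rightarrow> real list \<Rightarrow> real" where
  "phi T \<sigma> = (\<Sum>n\<in>{1..T}. \<Sum>j<n. \<sigma> ! j)"

lemma cnt_strain:
  assumes "n \<le> T"
  shows "real (cnt \<beta> \<theta> c a n) = (\<Sum>j<n. strain \<beta> \<theta> c T a ! j)"
  using assms by (simp add: cnt_def strain_def heav_sn)

lemma phi_strain: "phi T (strain \<beta> \<theta> c T a) = real (G \<beta> \<theta> c T a)"
  unfolding phi_def G_def of_nat_sum by (rule sum.cong) (auto simp: cnt_strain)

lemma G_mono:
  assumes "0 \<le> \<beta>" "\<beta> \<le> 1" "\<theta> > 0" "a \<le> a'"
  shows "G \<beta> \<theta> c T a \<le> G \<beta> \<theta> c T a'"
  unfolding G_def by (rule sum_mono) (use mono_inv[OF assms] in blast)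

lemma G_bound: "G \<beta> \<theta> c T a \<le> (\<Sum>n\<in>{1..T}. n)"
  unfolding G_def by (rule sum_mono) (rule cnt_le)

lemma eq_of_G:
  assumes "0 \<le> \<beta>" "\<beta> \<le> 1" "\<theta> > 0" "a \<le> a'"
    and eq: "G \<beta> \<theta> c T a = G \<beta> \<theta> c T a'"
  shows "strain \<beta> \<theta> c T a = strain \<beta> \<theta> c T a'"
proof -
  have ceq: "cnt \<beta> \<theta> c a n = cnt \<beta> \<theta> c a' n" if "n \<le> T" for n
  proof (cases "n = 0")
    case True then show ?thesis by (simp add: cnt_def)
  next
    case False
    then have n: "n \<in> {1..T}" using that by auto
    show ?thesis
    proof (rule ccontr)
      assume "cnt \<beta> \<theta> c a n \<noteq> cnt \<beta> \<theta> c a' n"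
      then have "cnt \<beta> \<theta> c a n < cnt \<beta> \<theta> c a' n" using mono_inv[OF assms(1-4)] by (meson le_neq_implies_less)
      note lt = this
      have all: "\<forall>m\<in>{1..T}. cnt \<beta> \<theta> c a m \<le> cnt \<beta> \<theta> c a' m" using mono_inv[OF assms(1-4)] by blast
      have "G \<beta> \<theta> c T a < G \<beta> \<theta> c T a'"
        unfolding G_def
        by (rule sum_strict_mono_ex1[OF finite_atLeastAtMost all]) (use n lt in blast)
      then show False using eq by simp
    qed
  qed
  have "sn \<beta> \<theta> c a j = sn \<beta> \<theta> c a' j" if "j < T" for j
  proof -
    have e1: "cnt \<beta> \<theta> c a j = cnt \<beta> \<theta> c a' j" using ceq[of j] that by simp
    have e2: "cnt \<beta> \<theta> c a (Suc j) = cnt \<beta> \<theta> c a' (Suc j)" using ceq[of "Suc j"] that by simp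
    show ?thesis using e1 e2 cnt_Suc[of \<beta> \<theta> c a j] cnt_Suc[of \<beta> \<theta> c a' j] by linarith
  qed
  then show ?thesis
    by (simp add: strain_def heav_sn)
qed

lemma upper:
  assumes "0 \<le> \<beta>" "\<beta> \<le> 1" "\<theta> > 0"
  shows "finite (range (strain \<beta> \<theta> c T))
     \<and> card (range (strain \<beta> \<theta> c T)) \<le> Suc (\<Sum>n\<in>{1..T}. n)
     \<and> (\<forall>\<sigma>\<in>range (strain \<beta> \<theta> c T). is_interval {a. strain \<beta> \<theta> c T a = \<sigma>})"
proof -
  let ?R = "range (strain \<beta> \<theta> c T)"
  let ?M = "(\<Sum>n\<in>{1..T}. n)"
  have eqG: "strain \<beta> \<theta> c T a = strain \<beta> \<theta> c T a'" if "G \<beta> \<theta> c T a = G \<beta> \<theta> c T a'" for a a'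
  proof (cases "a \<le> a'")
    case True then show ?thesis using eq_of_G[OF assms True that] by simp
  next
    case False then have a: "a' \<le> a" by simp
    show ?thesis using eq_of_G[OF assms a that[symmetric]] by simp
  qed
  have inj: "inj_on (phi T) ?R"
  proof (rule inj_onI)
    fix s1 s2 assume "s1 \<in> ?R" "s2 \<in> ?R" and e: "phi T s1 = phi T s2"
    then obtain a1 a2 where "s1 = strain \<beta> \<theta> c T a1" "s2 = strain \<beta> \<theta> c T a2" by blast
    then show "s1 = s2" using e eqG[of a1 a2] by (simp add: phi_strain)
  qed
  have sub: "phi T ` ?R \<subseteq> real ` {0..?M}"
  proof
    fix y assume "y \<in> phi T ` ?R"
    then obtain a where "y = phi T (strain \<beta> \<theta> c T a)" by blast
    then show "y \<in> real ` {0..?M}" using G_bound[of \<beta> \<theta> c T a] by (simp add: phi_strain)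
  qed
  have fin: "finite ?R"
    by (rule finite_imageD[OF finite_subset[OF sub] inj]) simp
  have "card ?R = card (phi T ` ?R)" using card_image[OF inj] by simp
  also have "\<dots> \<le> card (real ` {0..?M})" by (rule card_mono[OF _ sub]) simp
  also have "\<dots> \<le> card {0..?M}" by (rule card_image_le) simp
  finally have card: "card ?R \<le> Suc ?M" by simp
  have intv: "is_interval {a. strain \<beta> \<theta> c T a = \<sigma>}" if "\<sigma> \<in> ?R" for \<sigma>
    unfolding is_interval_1
  proof (intro ballI allI impI)
    fix a b x assume a: "a \<in> {a. strain \<beta> \<theta> c T a = \<sigma>}" and b: "b \<in> {a. strain \<beta> \<theta> c T a = \<sigma>}"
      and x: "a \<le> x \<and> x \<le> b"
    have "G \<beta> \<theta> c T a = G \<beta> \<theta> c T b"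
      using a b phi_strain[of T \<beta> \<theta> c a] phi_strain[of T \<beta> \<theta> c b] by simp
    moreover have "G \<beta> \<theta> c T a \<le> G \<beta> \<theta> c T x" "G \<beta> \<theta> c T x \<le> G \<beta> \<theta> c T b"
      using G_mono[OF assms] x by auto
    ultimately have "G \<beta> \<theta> c T a = G \<beta> \<theta> c T x" by simp
    then show "x \<in> {a. strain \<beta> \<theta> c T a = \<sigma>}" using eqG[of a x] a by simp
  qed
  show ?thesis using fin card intv by blast
qed


lemma sd:
  assumes "0 \<le> c" "c < 1" "0 \<le> a" "a < 1"
  shows "0 \<le> us 1 1 c a n \<and> us 1 1 c a n < 1 \<and> us 1 1 c a n + real (cnt 1 1 c a n) = c + real n * a"
proof (induction n)
  case 0 then show ?case using assms by (simp add: cnt_def)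
next
  case (Suc n)
  then show ?case using assms
    by (auto simp: us_Suc cnt_Suc sn_def algebra_simps)
qed

lemma cnt_char:
  assumes "0 \<le> c" "c < 1" "0 \<le> a" "a < 1"
  shows "real (cnt 1 1 c a n) \<le> c + real n * a \<and> c + real n * a < real (cnt 1 1 c a n) + 1"
  using sd[OF assms, of n] by linarith

lemma lower:
  fixes T :: nat
  defines "c \<equiv> 1 / (real T + 2)"
  shows "finite (range (strain 1 1 c T)) \<and> Suc (\<Sum>n\<in>{1..T}. n) \<le> card (range (strain 1 1 c T))"
proof -
  have c0: "0 < c" and c1: "c < 1" unfolding c_def by (auto simp: field_simps)
  define P where "P = Sigma {1..T} (\<lambda>n. {1..n})"
  define bp where "bp = (\<lambda>p::nat\<times>nat. (real (snd p) - c) / real (fst p))"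
  define S where "S = insert 0 (bp ` P)"
  have finP: "finite P" unfolding P_def by simp
  have cardP: "card P = (\<Sum>n\<in>{1..T}. n)" unfolding P_def by (subst card_SigmaI) auto
  have bp_range: "0 < bp p \<and> bp p < 1" if pP0: "p \<in> P" for p
  proof -
    obtain n m where p: "p = (n, m)" "1 \<le> m" "m \<le> n" using pP0 unfolding P_def by (cases p) auto
    have "real m - c > 0" using p c1 by simp
    moreover have "real m - c < real n" using p c0 by simp
    ultimately show ?thesis using p by (simp add: bp_def field_simps)
  qed
  have bp_inj: "inj_on bp P"
  proof (rule inj_onI)
    fix p q assume pP: "p \<in> P" and qP: "q \<in> P" and e: "bp p = bp q"
    obtain n m where p: "p = (n, m)" "1 \<le> m" "m \<le> n" "n \<le> T" using pP unfolding P_def by (cases p) auto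
    obtain n' m' where q: "q = (n', m')" "1 \<le> m'" "m' \<le> n'" "n' \<le> T" using qP unfolding P_def by (cases q) auto
    have "(real m - c) * real n' = (real m' - c) * real n"
      using e p q by (simp add: bp_def field_simps)
    then have "(real T + 2) * (real m * real n' - real m' * real n) = real n' - real n"
      unfolding c_def by (simp add: field_simps)
    then have "(of_int ((int T + 2) * (int m * int n' - int m' * int n)) :: real) = of_int (int n' - int n)"
      by simp
    then have ie: "(int T + 2) * (int m * int n' - int m' * int n) = int n' - int n"
      by (simp only: of_int_eq_iff)
    have "int m * int n' - int m' * int n = 0"
    proof (rule ccontr)
      assume ne: "int m * int n' - int m' * int n \<noteq> 0"
      have "int T + 2 \<le> \<bar>(int T + 2) * (int m * int n' - int m' * int n)\<bar>"
      proof -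
        have k1: "1 \<le> \<bar>int m * int n' - int m' * int n\<bar>" using ne by linarith
        have "(int T + 2) * 1 \<le> (int T + 2) * \<bar>int m * int n' - int m' * int n\<bar>"
          by (rule mult_left_mono[OF k1]) simp
        then show ?thesis by (simp add: abs_mult)
      qed
      moreover have "\<bar>int n' - int n\<bar> \<le> int T" using p q by linarith
      ultimately show False using ie by simp
    qed
    then have "n' = n" using ie by simp
    moreover then have "m = m'" using p \<open>int m * int n' - int m' * int n = 0\<close> by simp
    ultimately show "p = q" using p q by simp
  qed
  have zero_notin: "0 \<notin> bp ` P" using bp_range by fastforce
  have cardS: "card S = Suc (\<Sum>n\<in>{1..T}. n)"
    unfolding S_def using zero_notin finP cardP card_image[OF bp_inj] by simp
  have Srange: "0 \<le> a \<and> a < 1" if "a \<in> S" for a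
    using that bp_range unfolding S_def by fastforce
  have inj: "inj_on (strain 1 1 c T) S"
  proof (rule linorder_inj_onI')
    fix a a' assume aS: "a \<in> S" and a'S: "a' \<in> S" and lt: "a < a'"
    have "a' \<noteq> 0" using Srange[OF aS] lt by auto
    then obtain n m where q: "a' = bp (n, m)" "1 \<le> m" "m \<le> n" "n \<le> T"
      using a'S by (auto simp: S_def P_def)
    have na: "c + real n * a' = real m" using q by (simp add: bp_def)
    have "c + real n * a < real m"
    proof -
      have "real n * a < real n * a'" using lt q by (intro mult_strict_left_mono) auto
      then show ?thesis using na by linarith
    qed
    then have k1: "cnt 1 1 c a n < m"
      using cnt_char[OF less_imp_le[OF c0] c1, of a n] Srange[OF aS] by linarith
    have k2: "cnt 1 1 c a' n = m"
      using cnt_char[OF less_imp_le[OF c0] c1, of a' n] Srange[OF a'S] na by linarith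
    show "strain 1 1 c T a \<noteq> strain 1 1 c T a'"
    proof
      assume "strain 1 1 c T a = strain 1 1 c T a'"
      then have "real (cnt 1 1 c a n) = real (cnt 1 1 c a' n)"
        using cnt_strain[OF q(4), of 1 1 c a] cnt_strain[OF q(4), of 1 1 c a'] by simp
      then show False using k1 k2 by simp
    qed
  qed
  have fin: "finite (range (strain 1 1 c T))" using upper[of 1 1 c T] by simp
  have "card S = card (strain 1 1 c T ` S)" using card_image[OF inj] by simp
  also have "\<dots> \<le> card (range (strain 1 1 c T))" by (rule card_mono[OF fin]) auto
  finally show ?thesis using fin cardS by simp
qed


theorem lemma4p3:
  fixes W :: "real^'n^'m" and b u0 :: "real^'m" and k :: 'm
    and \<beta> \<theta> :: real and T :: nat
  assumes "0 \<le> \<beta>" and "\<beta> \<le> 1" and "\<theta> > 0"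
  shows "finite (range (spike_train \<beta> \<theta> W b u0 T k))
      \<and> real (card (range (spike_train \<beta> \<theta> W b u0 T k))) \<le> (real T ^ 2 + real T + 2) / 2
      \<and> (\<forall>\<sigma> \<in> range (spike_train \<beta> \<theta> W b u0 T k).
            \<exists>I :: real set. is_interval I \<and>
              {x. spike_train \<beta> \<theta> W b u0 T k x = \<sigma>} = {x. (W $ k) \<bullet> x + b $ k \<in> I})
      \<and> (W $ k \<noteq> 0 \<longrightarrow>
           (\<exists>u0' :: real^'m. \<exists>\<beta>' \<theta>' :: real. 0 \<le> \<beta>' \<and> \<beta>' \<le> 1 \<and> \<theta>' > 0 \<and>
              real (card (range (spike_train \<beta>' \<theta>' W b u0' T k))) = (real T ^ 2 + real T + 2) / 2))"
proof -
  let ?M = "\<Sum>n\<in>{1..T}. n"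
  have Mval: "real (Suc ?M) = (real T ^ 2 + real T + 2) / 2"
  proof -
    have "2 * (\<Sum>i = Suc 0..T. real i) = real T * (real T + 1)"
      by (rule double_gauss_sum_from_Suc_0)
    then have "real ?M = real T * (real T + 1) / 2" by (simp add: of_nat_sum)
    then show ?thesis by (simp add: power2_eq_square field_simps)
  qed
  have rng: "range (spike_train \<beta>' \<theta>' W b u0' T k) = strain \<beta>' \<theta>' (u0'$k) T ` ((\<lambda>x. W$k \<bullet> x + b$k) ` UNIV)"
    for \<beta>' \<theta>' u0'
    by (auto simp: bridge image_image)
  let ?R = "range (spike_train \<beta> \<theta> W b u0 T k)"
  let ?S = "range (strain \<beta> \<theta> (u0$k) T)"
  have up: "finite ?S \<and> card ?S \<le> Suc ?M \<and> (\<forall>\<sigma>\<in>?S. is_interval {a. strain \<beta> \<theta> (u0$k) T a = \<sigma>})"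
    by (rule upper[OF assms])
  have sub: "?R \<subseteq> ?S" unfolding rng[of \<beta> \<theta> u0] by auto
  have P1: "finite ?R" using up sub finite_subset by blast
  have "card ?R \<le> Suc ?M" using card_mono[OF _ sub] up by fastforce
  then have P2: "real (card ?R) \<le> (real T ^ 2 + real T + 2) / 2" using Mval
    by (metis of_nat_le_iff)
  have P3: "\<forall>\<sigma> \<in> ?R. \<exists>I :: real set. is_interval I \<and>
              {x. spike_train \<beta> \<theta> W b u0 T k x = \<sigma>} = {x. (W $ k) \<bullet> x + b $ k \<in> I}"
  proof
    fix \<sigma> assume "\<sigma> \<in> ?R"
    then have s: "\<sigma> \<in> ?S" using sub by blast
    show "\<exists>I :: real set. is_interval I \<and>
              {x. spike_train \<beta> \<theta> W b u0 T k x = \<sigma>} = {x. (W $ k) \<bullet> x + b $ k \<in> I}"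
      by (rule exI[of _ "{a. strain \<beta> \<theta> (u0$k) T a = \<sigma>}"]) (use up s in \<open>auto simp: bridge\<close>)
  qed
  have P4: "W $ k \<noteq> 0 \<longrightarrow>
           (\<exists>u0' :: real^'m. \<exists>\<beta>' \<theta>' :: real. 0 \<le> \<beta>' \<and> \<beta>' \<le> 1 \<and> \<theta>' > 0 \<and>
              real (card (range (spike_train \<beta>' \<theta>' W b u0' T k))) = (real T ^ 2 + real T + 2) / 2)"
  proof
    assume w: "W $ k \<noteq> 0"
    define c where "c = 1 / (real T + 2)"
    define u0' :: "real^'m" where "u0' = (\<chi> i. c)"
    have surj: "(\<lambda>x. W$k \<bullet> x + b$k) ` UNIV = UNIV"
    proof -
      have "a \<in> (\<lambda>x. W$k \<bullet> x + b$k) ` UNIV" for a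
      proof
        show "a = W$k \<bullet> (((a - b$k) / (W$k \<bullet> W$k)) *\<^sub>R W$k) + b$k"
          using w by (simp add: inner_scaleR_right)
      qed simp
      then show ?thesis by blast
    qed
    have R': "range (spike_train 1 1 W b u0' T k) = range (strain 1 1 c T)"
      unfolding rng surj by (simp add: u0'_def)
    have lo: "finite (range (strain 1 1 c T)) \<and> Suc ?M \<le> card (range (strain 1 1 c T))"
      unfolding c_def by (rule lower)
    have hi: "card (range (strain 1 1 c T)) \<le> Suc ?M" using upper[of 1 1 c T] by simp
    have "card (range (spike_train 1 1 W b u0' T k)) = Suc ?M" using R' lo hi by simp
    then show "\<exists>u0' :: real^'m. \<exists>\<beta>' \<theta>' :: real. 0 \<le> \<beta>' \<and> \<beta>' \<le> 1 \<and> \<theta>' > 0 \<and>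
              real (card (range (spike_train \<beta>' \<theta>' W b u0' T k))) = (real T ^ 2 + real T + 2) / 2"
      using Mval by (intro exI[of _ u0'] exI[of _ 1]) simp
  qed
  show ?thesis using P1 P2 P3 P4 by blast
qed

end
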